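(* If $G$ is a graph on $n$ vertices with minimum degree $\delta(G)\ge 2$, then $\gamma_{\rm tg}(G)\le \frac{3}{4}n$.
   Context: For a graph $G$ without isolated vertices, a vertex $x$ totally dominates a vertex $y$ if $x$ and $y$ are adjacent. The total domination game on $G$ is played by two players, Dominator and Staller, who alternately choose vertices of $G$, Dominator choosing first. A vertex may be chosen only if it totally dominates at least one vertex that is not totally dominated by the previously chosen vertices. The game ends when the set of chosen vertices is a total dominating set of $G$, i.e. every vertex of $G$ has a neighbor among the chosen vertices. Dominator wants to minimize the number of chosen vertices and Staller wants to maximize it. The game total domination number $\gamma_{\rm tg}(G)$ is the number of vertices chosen when Dominator starts and both players play optimally. *)

theory Defs
  imports Main
begin

definition simple_graph :: "'a set \<Rightarrow> ('a \<Rightarrow> 'a \<Rightarrow> bool) \<Rightarrow> bool" where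
  "simple_graph V E \<longleftrightarrow> finite V \<and> (\<forall>x y. E x y \<longrightarrow> x \<in> V \<and> y \<in> V)
     \<and> (\<forall>x y. E x y \<longrightarrow> E y x) \<and> (\<forall>x. \<not> E x x)"

definition degree :: "'a set \<Rightarrow> ('a \<Rightarrow> 'a \<Rightarrow> bool) \<Rightarrow> 'a \<Rightarrow> nat" where
  "degree V E v = card {u \<in> V. E v u}"

definition tdominated :: "'a set \<Rightarrow> ('a \<Rightarrow> 'a \<Rightarrow> bool) \<Rightarrow> 'a set \<Rightarrow> 'a set" where
  "tdominated V E D = {y \<in> V. \<exists>x\<in>D. E x y}"

definition is_tds :: "'a set \<Rightarrow> ('a \<Rightarrow> 'a \<Rightarrow> bool) \<Rightarrow> 'a set \<Rightarrow> bool" where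
  "is_tds V E D \<longleftrightarrow> tdominated V E D = V"

definition legal_moves :: "'a set \<Rightarrow> ('a \<Rightarrow> 'a \<Rightarrow> bool) \<Rightarrow> 'a set \<Rightarrow> 'a set" where
  "legal_moves V E D = {x \<in> V. \<exists>y\<in>V. E x y \<and> y \<notin> tdominated V E D}"

text \<open>Optimal-play value of the remaining game from position D (number of further moves),
  with the player to move given by the boolean (True = Dominator, minimising;
  False = Staller, maximising). The first argument is fuel; every move totally dominates
  a new vertex, so fuel card V always suffices.\<close>
fun game_val :: "nat \<Rightarrow> 'a set \<Rightarrow> ('a \<Rightarrow> 'a \<Rightarrow> bool) \<Rightarrow> bool \<Rightarrow> 'a set \<Rightarrow> nat" where
  "game_val 0 V E p D = 0"
| "game_val (Suc k) V E p D =
     (if is_tds V E D then 0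
      else if p then Min ((\<lambda>x. Suc (game_val k V E False (insert x D))) ` legal_moves V E D)
      else Max ((\<lambda>x. Suc (game_val k V E True (insert x D))) ` legal_moves V E D))"

definition gamma_tg :: "'a set \<Rightarrow> ('a \<Rightarrow> 'a \<Rightarrow> bool) \<Rightarrow> nat" where
  "gamma_tg V E = game_val (card V) V E True {}"

end

theory Submission
  imports Defs
begin

definition UU :: "'a set \<Rightarrow> ('a \<Rightarrow> 'a \<Rightarrow> bool) \<Rightarrow> 'a set \<Rightarrow> 'a set" where
  "UU V E D = V - tdominated V E D"

definition PP :: "'a set \<Rightarrow> ('a \<Rightarrow> 'a \<Rightarrow> bool) \<Rightarrow> 'a set \<Rightarrow> nat" where
  "PP V E D = 2 * card (UU V E D) + card (legal_moves V E D)"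

definition MM :: "'a set \<Rightarrow> ('a \<Rightarrow> 'a \<Rightarrow> bool) \<Rightarrow> 'a set \<Rightarrow> bool" where
  "MM V E U = ((\<forall>x\<in>V. card {y\<in>U. E x y} \<le> 1) \<and> (\<forall>y\<in>U. card {x\<in>V. E x y} \<le> 2))"

lemma lm_eq: "legal_moves V E D = {x\<in>V. \<exists>y\<in>UU V E D. E x y}"
  unfolding legal_moves_def UU_def tdominated_def by auto

lemma UU_ins: "UU V E (insert x D) = {y \<in> UU V E D. \<not> E x y}"
  unfolding UU_def tdominated_def by auto

lemma MM_mono: "MM V E U \<Longrightarrow> U' \<subseteq> U \<Longrightarrow> finite U \<Longrightarrow> MM V E U'"
  unfolding MM_def
proof (intro conjI ballI, goal_cases)
  case (1 x)
  have "card {y\<in>U'. E x y} \<le> card {y\<in>U. E x y}"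
    by (rule card_mono) (use 1 in auto)
  with 1 show ?case by auto
next
  case (2 y)
  then show ?case by auto
qed

context
  fixes V :: "'a set" and E :: "'a \<Rightarrow> 'a \<Rightarrow> bool"
  assumes G: "simple_graph V E" and deg: "\<forall>v\<in>V. degree V E v \<ge> 2"
begin

lemma finV: "finite V" using G unfolding simple_graph_def by auto

lemma symE: "E a b \<Longrightarrow> E b a" using G unfolding simple_graph_def by auto

lemma inV: "E a b \<Longrightarrow> a \<in> V \<and> b \<in> V" using G unfolding simple_graph_def by auto

lemma UU_sub: "UU V E D \<subseteq> V" unfolding UU_def by auto

lemma R_sub: "legal_moves V E D \<subseteq> V" unfolding legal_moves_def by auto

lemma nbr2: "y \<in> V \<Longrightarrow> card {x\<in>V. E x y} \<ge> 2"
proof -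
  assume y: "y \<in> V"
  have "{x\<in>V. E x y} = {u\<in>V. E y u}" using symE by blast
  with deg y show ?thesis unfolding degree_def by auto
qed

lemma drop_gen:
  assumes x: "x \<in> legal_moves V E D"
    and Z: "Z \<subseteq> legal_moves V E D" "\<forall>z\<in>Z. z \<notin> legal_moves V E (insert x D)"
  shows "PP V E (insert x D) + 2 * card {y\<in>UU V E D. E x y} + card Z \<le> PP V E D"
proof -
  let ?U = "UU V E D" and ?A = "{y\<in>UU V E D. E x y}"
  let ?R = "legal_moves V E D" and ?R' = "legal_moves V E (insert x D)"
  have fU: "finite ?U" using finV UU_sub finite_subset by blast
  have fR: "finite ?R" using finV R_sub finite_subset by blast
  have "?U = UU V E (insert x D) \<union> ?A" and "UU V E (insert x D) \<inter> ?A = {}"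
    by (auto simp: UU_ins)
  hence cU: "card ?U = card (UU V E (insert x D)) + card ?A"
    using fU by (metis card_Un_disjoint finite_Un)
  have R'R: "?R' \<subseteq> ?R" unfolding lm_eq UU_ins by auto
  have "?R' \<union> Z \<subseteq> ?R" using R'R Z by auto
  hence "card (?R' \<union> Z) \<le> card ?R" using fR card_mono by blast
  moreover have "card (?R' \<union> Z) = card ?R' + card Z"
    using Z R'R fR by (intro card_Un_disjoint) (auto intro: finite_subset)
  ultimately show ?thesis unfolding PP_def using cU by simp
qed

lemma x_notR: "x \<notin> legal_moves V E (insert x D)"
  unfolding lm_eq UU_ins by auto

lemma notR:
  assumes "\<forall>y'\<in>UU V E D. E z y' \<longrightarrow> y' = y" "E x y"
  shows "z \<notin> legal_moves V E (insert x D)"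
  using assms unfolding lm_eq UU_ins by auto

lemma A_ne: "x \<in> legal_moves V E D \<Longrightarrow> card {y\<in>UU V E D. E x y} \<ge> 1"
proof -
  assume "x \<in> legal_moves V E D"
  then obtain y where "y \<in> UU V E D" "E x y" unfolding lm_eq by auto
  moreover have "finite {y\<in>UU V E D. E x y}" using finV UU_sub finite_subset by fastforce
  ultimately show ?thesis by (metis (mono_tags, lifting) One_nat_def Suc_leI card_gt_0_iff empty_iff mem_Collect_eq)
qed

lemma staller3:
  assumes x: "x \<in> legal_moves V E D"
  shows "PP V E (insert x D) + 3 \<le> PP V E D"
proof -
  have "PP V E (insert x D) + 2 * card {y\<in>UU V E D. E x y} + card {x} \<le> PP V E D"
    by (rule drop_gen) (use x x_notR in auto)
  with A_ne[OF x] show ?thesis by simp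
qed

lemma drop4_unique:
  assumes x: "x \<in> legal_moves V E D" and y: "y \<in> UU V E D" "E x y"
    and uniq: "\<forall>z\<in>V. \<forall>y'\<in>UU V E D. E z y' \<longrightarrow> E z y \<longrightarrow> y' = y"
    and Z: "Z \<subseteq> {z\<in>V. E z y}"
  shows "PP V E (insert x D) + 2 + card Z \<le> PP V E D"
proof -
  have "PP V E (insert x D) + 2 * card {y\<in>UU V E D. E x y} + card Z \<le> PP V E D"
  proof (rule drop_gen[OF x])
    show "Z \<subseteq> legal_moves V E D" using Z y unfolding lm_eq by auto
    show "\<forall>z\<in>Z. z \<notin> legal_moves V E (insert x D)"
    proof
      fix z assume "z \<in> Z"
      hence "z \<in> V" "E z y" using Z by auto
      thus "z \<notin> legal_moves V E (insert x D)"
        by (intro notR[OF _ y(2)]) (use uniq in auto)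
    qed
  qed
  with A_ne[OF x] show ?thesis by simp
qed

lemma uniq_from_card:
  assumes "\<forall>z\<in>V. card {y\<in>U. E z y} \<le> 1" "finite U"
  shows "\<forall>z\<in>V. \<forall>y'\<in>U. E z y' \<longrightarrow> E z y \<longrightarrow> y \<in> U \<longrightarrow> y' = y"
proof (intro ballI impI)
  fix z y' assume h: "z \<in> V" "y' \<in> U" "E z y'" "E z y" "y \<in> U"
  show "y' = y"
  proof (rule ccontr)
    assume "y' \<noteq> y"
    hence "card {y', y} \<le> card {y\<in>U. E z y}"
      using h assms(2) by (intro card_mono) auto
    with \<open>y' \<noteq> y\<close> assms(1) h(1) show False by auto
  qed
qed

lemma staller4:
  assumes x: "x \<in> legal_moves V E D" and M: "MM V E (UU V E D)"
  shows "PP V E (insert x D) + 4 \<le> PP V E D"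
proof -
  obtain y where y: "y \<in> UU V E D" "E x y" using x unfolding lm_eq by auto
  have fU: "finite (UU V E D)" using finV UU_sub finite_subset by blast
  have uniq: "\<forall>z\<in>V. \<forall>y'\<in>UU V E D. E z y' \<longrightarrow> E z y \<longrightarrow> y' = y"
    using uniq_from_card[OF _ fU] M y(1) unfolding MM_def by blast
  have "y \<in> V" using y UU_sub by auto
  hence c2: "card {z\<in>V. E z y} \<ge> 2" by (rule nbr2)
  have fN: "finite {z\<in>V. E z y}" using finV by auto
  obtain Z where Z: "Z \<subseteq> {z\<in>V. E z y}" "card Z = 2"
    using c2 fN by (meson obtain_subset_with_card_n)
  show ?thesis using drop4_unique[OF x y uniq Z(1)] Z(2) by simp
qed

lemma dominator:
  assumes nt: "\<not> is_tds V E D"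
  shows "\<exists>x\<in>legal_moves V E D. PP V E (insert x D) + 4 +
            (if MM V E (UU V E (insert x D)) then 0 else 1) \<le> PP V E D"
proof -
  have fU: "finite (UU V E D)" using finV UU_sub finite_subset by blast
  from nt obtain y0 where y0: "y0 \<in> UU V E D"
    unfolding is_tds_def UU_def tdominated_def by auto
  have "y0 \<in> V" using y0 UU_sub by auto
  from nbr2[OF this] have "{z\<in>V. E z y0} \<noteq> {}" by (metis card.empty not_numeral_le_zero)
  then obtain x0 where x0: "x0 \<in> V" "E x0 y0" by auto
  hence x0R: "x0 \<in> legal_moves V E D" using y0 unfolding lm_eq by auto
  show ?thesis
  proof (cases "\<exists>x\<in>legal_moves V E D. card {y\<in>UU V E D. E x y} \<ge> 2")
    case True
    then obtain x where x: "x \<in> legal_moves V E D" "card {y\<in>UU V E D. E x y} \<ge> 2" by auto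
    have "PP V E (insert x D) + 2 * card {y\<in>UU V E D. E x y} + card {x} \<le> PP V E D"
      by (rule drop_gen) (use x x_notR in auto)
    with x(2) show ?thesis using x(1) by (intro bexI[of _ x]) auto
  next
    case False
    have c1: "\<forall>z\<in>V. card {y\<in>UU V E D. E z y} \<le> 1"
    proof
      fix z assume z: "z \<in> V"
      show "card {y\<in>UU V E D. E z y} \<le> 1"
      proof (cases "z \<in> legal_moves V E D")
        case True then show ?thesis using False by auto
      next
        case f: False
        hence "{y\<in>UU V E D. E z y} = {}" using z unfolding lm_eq by blast
        thus ?thesis by (metis card.empty le0)
      qed
    qed
    show ?thesis
    proof (cases "MM V E (UU V E D)")
      case True
      have "MM V E (UU V E (insert x0 D))"
        by (rule MM_mono[OF True _ fU]) (auto simp: UU_ins)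
      with staller4[OF x0R True] show ?thesis using x0R by (intro bexI[of _ x0]) auto
    next
      case nM: False
      then obtain y where y: "y \<in> UU V E D" "card {x\<in>V. E x y} > 2"
        using c1 unfolding MM_def by auto
      hence "{x\<in>V. E x y} \<noteq> {}" by (metis card.empty not_less0)
      then obtain x where x: "x \<in> V" "E x y" by auto
      hence xR: "x \<in> legal_moves V E D" using y unfolding lm_eq by auto
      have uniq: "\<forall>z\<in>V. \<forall>y'\<in>UU V E D. E z y' \<longrightarrow> E z y \<longrightarrow> y' = y"
        using uniq_from_card[OF c1 fU] y(1) by blast
      have "PP V E (insert x D) + 2 + card {z\<in>V. E z y} \<le> PP V E D"
        by (rule drop4_unique[OF xR y(1) x(2) uniq]) auto
      with y(2) show ?thesis using xR by (intro bexI[of _ x]) auto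
    qed
  qed
qed

lemma main:
  "4 * game_val k V E p D \<le> PP V E D + (if p \<or> MM V E (UU V E D) then 0 else 1)"
proof (induction k arbitrary: p D)
  case 0
  then show ?case by simp
next
  case (Suc k)
  show ?case
  proof (cases "is_tds V E D")
    case True then show ?thesis by simp
  next
    case nt: False
    have fR: "finite (legal_moves V E D)" using finV R_sub finite_subset by blast
    show ?thesis
    proof (cases p)
      case True
      obtain x where x: "x \<in> legal_moves V E D" and
        dx: "PP V E (insert x D) + 4 + (if MM V E (UU V E (insert x D)) then 0 else 1) \<le> PP V E D"
        using dominator[OF nt] by blast
      have "Min ((\<lambda>x. Suc (game_val k V E False (insert x D))) ` legal_moves V E D)
            \<le> Suc (game_val k V E False (insert x D))"
        using fR x by (intro Min_le) auto
      moreover have "4 * game_val k V E False (insert x D) \<le> PP V E (insert x D) +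
            (if MM V E (UU V E (insert x D)) then 0 else 1)"
        using Suc.IH[of False "insert x D"] by simp
      ultimately show ?thesis using nt True dx by simp
    next
      case False
      have ne: "legal_moves V E D \<noteq> {}"
      proof -
        from nt obtain y0 where y0: "y0 \<in> UU V E D"
          unfolding is_tds_def UU_def tdominated_def by auto
        have "y0 \<in> V" using y0 UU_sub by auto
        from nbr2[OF this] have "{z\<in>V. E z y0} \<noteq> {}" by (metis card.empty not_numeral_le_zero)
        then obtain x0 where x0: "x0 \<in> V" "E x0 y0" by auto
        thus ?thesis using y0 unfolding lm_eq by auto
      qed
      have "Max ((\<lambda>x. Suc (game_val k V E True (insert x D))) ` legal_moves V E D)
            \<in> (\<lambda>x. Suc (game_val k V E True (insert x D))) ` legal_moves V E D"
        using fR ne by (intro Max_in) auto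
      then obtain x where x: "x \<in> legal_moves V E D" and
        mx: "Max ((\<lambda>x. Suc (game_val k V E True (insert x D))) ` legal_moves V E D)
             = Suc (game_val k V E True (insert x D))" by auto
      have ih: "4 * game_val k V E True (insert x D) \<le> PP V E (insert x D)"
        using Suc.IH[of True "insert x D"] by simp
      have "PP V E (insert x D) + 3 + (if MM V E (UU V E D) then 1 else 0) \<le> PP V E D"
        using staller3[OF x] staller4[OF x] by auto
      then show ?thesis using nt False mx ih by auto
    qed
  qed
qed

end

theorem corollary3:
  fixes V :: "'a set" and E :: "'a \<Rightarrow> 'a \<Rightarrow> bool"
  assumes "simple_graph V E"
    and "\<forall>v\<in>V. degree V E v \<ge> 2"
  shows "4 * gamma_tg V E \<le> 3 * card V"
proof -
  have "4 * gamma_tg V E \<le> PP V E {}"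
    using main[OF assms, of "card V" True "{}"] unfolding gamma_tg_def by simp
  moreover have "UU V E {} = V" unfolding UU_def tdominated_def by auto
  moreover have "card (legal_moves V E {}) \<le> card V"
    using assms(1) unfolding simple_graph_def legal_moves_def by (intro card_mono) auto
  ultimately show ?thesis unfolding PP_def by simp
qed

end
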